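(* Let $S\subset\mathbb{R}^q$ be compact and $\ell:\mathbb{R}^q\times\mathbb{R}^q\to(0,1)$ continuous. Let $s\in S$, let $(\xi_k)_{k\in\mathbb{N}}\subset\mathbb{R}^q$ be bounded, and let $d_1,d_2,\dots\in\{0,1\}$ be independent random variables with $\Pr(d_k=1)=\ell(s,\xi_k)$. Let $c_1,\dots,c_M\in S$ be distinct, let $\hat p_0:\{1,\dots,M\}\to(0,1)$ with $\sum_i\hat p_0(i)=1$, and define $\hat p_k$ by $$\hat p_k(i\mid d_{1:k};\xi_{1:k})=\frac{g(d_k\mid c_i;\xi_k)\,\hat p_{k-1}(i\mid d_{1:k-1};\xi_{1:k-1})}{\sum_{j=1}^M g(d_k\mid c_j;\xi_k)\,\hat p_{k-1}(j\mid d_{1:k-1};\xi_{1:k-1})},$$ where $g(d\mid x;\xi)=\ell(x,\xi)^d(1-\ell(x,\xi))^{1-d}$. Suppose $c_j=s$ for some $j\in\{1,\dots,M\}$. If for every $i\neq j$ there exists $p>\tfrac12$ such that $$\liminf_{n\to\infty}\frac{1}{n^p}\sum_{k=1}^n\big(\ell(s,\xi_k)-\ell(c_i,\xi_k)\big)^2>0,$$ then $\hat p_k(j\mid d_{1:k};\xi_{1:k})\to 1$ almost surely. *)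

theory Defs
  imports "HOL-Probability.Probability"
begin

definition lik :: "('v \<Rightarrow> 'v \<Rightarrow> real) \<Rightarrow> nat \<Rightarrow> 'v \<Rightarrow> 'v \<Rightarrow> real" where
  "lik l d x \<xi> = l x \<xi> ^ d * (1 - l x \<xi>) ^ (1 - d)"

text \<open>Posterior p_k(i | d_{1:k}; xi_{1:k}); candidates c_1..c_M, prior p0,
  observations d_1, d_2, ... and designs xi_1, xi_2, ... (index 0 unused).\<close>
fun posterior :: "('v \<Rightarrow> 'v \<Rightarrow> real) \<Rightarrow> (nat \<Rightarrow> 'v) \<Rightarrow> nat \<Rightarrow> (nat \<Rightarrow> real)
    \<Rightarrow> (nat \<Rightarrow> 'v) \<Rightarrow> (nat \<Rightarrow> nat) \<Rightarrow> nat \<Rightarrow> nat \<Rightarrow> real" where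
  "posterior l c M p0 \<xi> d 0 i = p0 i"
| "posterior l c M p0 \<xi> d (Suc k) i =
     lik l (d (Suc k)) (c i) (\<xi> (Suc k)) * posterior l c M p0 \<xi> d k i /
     (\<Sum>j=1..M. lik l (d (Suc k)) (c j) (\<xi> (Suc k)) * posterior l c M p0 \<xi> d k j)"

end

theory Submission
  imports Defs "HOL-Probability.Probability" "HOL-Real_Asymp.Real_Asymp"
begin


lemma ln_sqrt_bound:
  fixes x y :: real assumes "x > 0" "y > 0"
  shows "y * (ln x - ln y) \<le> 2 * (sqrt (x * y) - y)"
proof -
  have "ln x - ln y = 2 * ln (sqrt (x / y))"
    using assms by (simp add: ln_sqrt ln_div)
  also have "\<dots> \<le> 2 * (sqrt (x / y) - 1)"
    using assms ln_le_minus_one[of "sqrt (x/y)"] by simp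
  finally have "y * (ln x - ln y) \<le> y * (2 * (sqrt (x / y) - 1))"
    using assms by (intro mult_left_mono) auto
  also have "y * sqrt (x / y) = sqrt (x * y)"
    using assms by (simp add: real_sqrt_divide real_sqrt_mult field_simps)
  ultimately show ?thesis by (simp add: algebra_simps)
qed

lemma pinsker_like:
  fixes p q :: real assumes "0 < p" "p < 1" "0 < q" "q < 1"
  shows "p * (ln q - ln p) + (1 - p) * (ln (1 - q) - ln (1 - p)) \<le> - (p - q)\<^sup>2 / 4"
proof -
  define a b c e where "a = sqrt p" "b = sqrt q" "c = sqrt (1-p)" "e = sqrt (1-q)"
  have a2: "a^2 = p" "b^2 = q" "c^2 = 1 - p" "e^2 = 1 - q" using assms by (auto simp: a_b_c_e_def)
  have pos: "a \<ge> 0" "b \<ge> 0" "a \<le> 1" "b \<le> 1" using assms by (auto simp: a_b_c_e_def)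
  have h1: "p * (ln q - ln p) \<le> 2 * (a * b - p)"
    using ln_sqrt_bound[of q p] assms by (simp add: a_b_c_e_def real_sqrt_mult mult.commute)
  have h2: "(1 - p) * (ln (1 - q) - ln (1 - p)) \<le> 2 * (c * e - (1 - p))"
    using ln_sqrt_bound[of "1-q" "1-p"] assms by (simp add: a_b_c_e_def real_sqrt_mult mult.commute)
  have e1: "2 * (a * b - p) + 2 * (c * e - (1 - p)) = - ((a - b)^2) - (c - e)^2"
    using a2 by (simp add: power2_eq_square algebra_simps)
  have e2: "(p - q)^2 = (a - b)^2 * (a + b)^2"
    using a2 by (simp add: power2_eq_square algebra_simps)
  have "a + b \<le> 2" using pos by simp
  then have "(a + b)^2 \<le> 2^2" using pos by (intro power_mono) auto
  then have "(a - b)^2 * (a + b)^2 \<le> (a - b)^2 * 4" by (intro mult_left_mono) auto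
  then have "(p - q)^2 \<le> 4 * (a - b)^2" using e2 by simp
  moreover have "(c - e)^2 \<ge> 0" by simp
  ultimately show ?thesis using h1 h2 e1 by linarith
qed



definition wt :: "('v \<Rightarrow> 'v \<Rightarrow> real) \<Rightarrow> (nat \<Rightarrow> 'v) \<Rightarrow> (nat \<Rightarrow> real)
    \<Rightarrow> (nat \<Rightarrow> 'v) \<Rightarrow> (nat \<Rightarrow> nat) \<Rightarrow> nat \<Rightarrow> nat \<Rightarrow> real" where
  "wt l c p0 \<xi> D k i = p0 i * (\<Prod>m=1..k. lik l (D m) (c i) (\<xi> m))"

lemma lik_pos: assumes "\<And>x y. 0 < l x y \<and> l x y < 1" shows "lik l d x y > 0"
  using assms[of x y] by (simp add: lik_def)

lemma wt_pos:
  assumes "\<And>x y. 0 < l x y \<and> l x y < 1" "pr i > 0"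
  shows "wt l c pr \<xi> D k i > 0"
  unfolding wt_def using assms lik_pos[where l=l, OF assms(1)] by (auto intro!: mult_pos_pos prod_pos)

lemma wt_Suc: "wt l c p0 \<xi> D (Suc k) i = lik l (D (Suc k)) (c i) (\<xi> (Suc k)) * wt l c p0 \<xi> D k i"
  unfolding wt_def by (simp add: prod.cl_ivl_Suc)

lemma post_closed:
  assumes l: "\<And>x y. 0 < l x y \<and> l x y < 1" and p: "\<And>i. i \<in> {1..M} \<Longrightarrow> 0 < pr i"
    and s: "(\<Sum>i=1..M. pr i) = 1"
  shows "posterior l c M pr \<xi> D k i = wt l c pr \<xi> D k i / (\<Sum>i'=1..M. wt l c pr \<xi> D k i')"
proof (induction k arbitrary: i)
  case 0
  then show ?case using s by (simp add: wt_def)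
next
  case (Suc k)
  have M: "M \<ge> 1" using s by (cases M) auto
  define W where "W = (\<Sum>i'=1..M. wt l c pr \<xi> D k i')"
  have W: "W > 0" unfolding W_def using M by (intro sum_pos) (auto intro!: wt_pos[where l=l, OF l] p)
  let ?L = "\<lambda>i. lik l (D (Suc k)) (c i) (\<xi> (Suc k))"
  have "posterior l c M pr \<xi> D (Suc k) i = ?L i * (wt l c pr \<xi> D k i / W) /
          (\<Sum>j=1..M. ?L j * (wt l c pr \<xi> D k j / W))"
    by (simp add: Suc W_def)
  also have "(\<Sum>j=1..M. ?L j * (wt l c pr \<xi> D k j / W)) = (\<Sum>j=1..M. ?L j * wt l c pr \<xi> D k j) / W"
    by (simp add: sum_divide_distrib)
  also have "?L i * (wt l c pr \<xi> D k i / W) / \<dots> = ?L i * wt l c pr \<xi> D k i / (\<Sum>j=1..M. ?L j * wt l c pr \<xi> D k j)"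
    using W by (simp add: field_simps)
  finally show ?case by (simp add: wt_Suc)
qed

lemma wt_ratio:
  assumes l: "\<And>x y. 0 < l x y \<and> l x y < 1" and "pr j > 0"
  shows "wt l c pr \<xi> D n i / wt l c pr \<xi> D n j = pr i / pr j *
     exp (- (\<Sum>m=1..n. ln (lik l (D m) (c j) (\<xi> m)) - ln (lik l (D m) (c i) (\<xi> m))))"
proof -
  have e: "(\<Prod>m=1..n. lik l (D m) (c x) (\<xi> m)) = exp (\<Sum>m=1..n. ln (lik l (D m) (c x) (\<xi> m)))" for x
    by (simp add: exp_sum lik_pos[where l=l, OF l])
  show ?thesis unfolding wt_def e
    by (simp add: sum_subtractf exp_diff field_simps)
qed

lemma post_to_1:
  assumes l: "\<And>x y. 0 < l x y \<and> l x y < 1" and p: "\<And>i. i \<in> {1..M} \<Longrightarrow> 0 < p0 i"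
    and s: "(\<Sum>i=1..M. p0 i) = 1" and j: "j \<in> {1..M}"
    and T: "\<And>i. i \<in> {1..M} \<Longrightarrow> i \<noteq> j \<Longrightarrow>
      filterlim (\<lambda>n. \<Sum>m=1..n. ln (lik l (D m) (c j) (\<xi> m)) - ln (lik l (D m) (c i) (\<xi> m))) at_top sequentially"
  shows "(\<lambda>k. posterior l c M p0 \<xi> D k j) \<longlonglongrightarrow> 1"
proof -
  define T where "T i n = (\<Sum>m=1..n. ln (lik l (D m) (c j) (\<xi> m)) - ln (lik l (D m) (c i) (\<xi> m)))" for i n
  have pj: "p0 j > 0" using p j by auto
  have eq: "posterior l c M p0 \<xi> D n j = 1 / (\<Sum>i=1..M. p0 i / p0 j * exp (- T i n))" for n
  proof -
    have wj: "wt l c p0 \<xi> D n j > 0" using wt_pos[where l=l and pr=p0, OF l pj] .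
    have "(\<Sum>i=1..M. p0 i / p0 j * exp (- T i n)) = (\<Sum>i=1..M. wt l c p0 \<xi> D n i / wt l c p0 \<xi> D n j)"
      unfolding T_def using wt_ratio[where l=l and pr=p0, OF l pj] by simp
    also have "\<dots> = (\<Sum>i=1..M. wt l c p0 \<xi> D n i) / wt l c p0 \<xi> D n j"
      by (simp add: sum_divide_distrib)
    finally show ?thesis using post_closed[where l=l and pr=p0, OF l p s] wj by simp
  qed
  have lim: "(\<lambda>n. p0 i / p0 j * exp (- T i n)) \<longlonglongrightarrow> (if i = j then 1 else 0)" if i: "i \<in> {1..M}" for i
  proof (cases "i = j")
    case True
    then show ?thesis using pj by (simp add: T_def)
  next
    case False
    have "filterlim (\<lambda>n. - T i n) at_bot sequentially"
      using T[OF i False] unfolding T_def filterlim_uminus_at_bot by simp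
    then have "(\<lambda>n. exp (- T i n)) \<longlonglongrightarrow> 0"
      by (rule filterlim_compose[OF exp_at_bot])
    then have "(\<lambda>n. p0 i / p0 j * exp (- T i n)) \<longlonglongrightarrow> p0 i / p0 j * 0"
      by (intro tendsto_mult tendsto_const)
    then show ?thesis using False by simp
  qed
  have "(\<lambda>n. \<Sum>i=1..M. p0 i / p0 j * exp (- T i n)) \<longlonglongrightarrow> (\<Sum>i=1..M. (if i = j then 1 else 0::real))"
    by (intro tendsto_sum lim)
  also have "(\<Sum>i=1..M. (if i = j then 1 else 0::real)) = 1" using j by simp
  finally have "(\<lambda>n. 1 / (\<Sum>i=1..M. p0 i / p0 j * exp (- T i n))) \<longlonglongrightarrow> 1 / 1"
    by (intro tendsto_divide tendsto_const) auto
  then show ?thesis unfolding eq by simp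
qed



lemma (in prob_space) key:
  fixes l :: "'v \<Rightarrow> 'v \<Rightarrow> real" and d :: "nat \<Rightarrow> 'a \<Rightarrow> nat" and \<xi> :: "nat \<Rightarrow> 'v"
  assumes l: "\<And>x y. 0 < l x y \<and> l x y < 1"
    and indep: "indep_vars (\<lambda>_. count_space UNIV) d {1..}"
    and d01: "\<And>k \<omega>. k \<ge> 1 \<Longrightarrow> \<omega> \<in> space M \<Longrightarrow> d k \<omega> \<in> {0, 1}"
    and pr1: "\<And>k. k \<ge> 1 \<Longrightarrow> prob {\<omega> \<in> space M. d k \<omega> = 1} = l s (\<xi> k)"
    and a0: "0 < a" and a: "\<And>x k. x \<in> {s, u} \<Longrightarrow> a \<le> l x (\<xi> k) \<and> l x (\<xi> k) \<le> 1 - a"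
    and pp: "p > 1/2"
    and lim: "liminf (\<lambda>n. ereal ((1 / real n powr p) * (\<Sum>k=1..n. (l s (\<xi> k) - l u (\<xi> k))\<^sup>2))) > 0"
  shows "AE \<omega> in M. filterlim (\<lambda>n. \<Sum>m=1..n. ln (lik l (d m \<omega>) s (\<xi> m)) - ln (lik l (d m \<omega>) u (\<xi> m)))
           at_top sequentially"
proof -
  define g where "g m t = ln (lik l t u (\<xi> m)) - ln (lik l t s (\<xi> m))" for m t
  define X where "X m \<omega> = (if m = 0 then 0 else g m (d m \<omega>))" for m \<omega>
  define L where "L = - ln a"
  define \<delta> where "\<delta> k = (l s (\<xi> k) - l u (\<xi> k))\<^sup>2" for k
  have a1: "a \<le> 1/2" using a[of s 0] by auto
  have L: "L > 0" using a0 a1 by (simp add: L_def)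
  have dmeas: "d m \<in> measurable M (count_space UNIV)" if "m \<ge> 1" for m
    using indep that unfolding indep_vars_def by auto
  have Xmeas[measurable]: "X m \<in> borel_measurable M" for m
  proof (cases "m = 0")
    case True then have "X m = (\<lambda>_. 0)" by (simp add: X_def fun_eq_iff)
    then show ?thesis by simp
  next
    case False
    then have "X m = (\<lambda>\<omega>. g m (d m \<omega>))" by (simp add: X_def fun_eq_iff)
    then show ?thesis using dmeas[of m] False
      by (simp add: measurable_compose[OF _ measurable_count_space])
  qed
  have likb: "a \<le> lik l t x (\<xi> m) \<and> lik l t x (\<xi> m) \<le> 1" if "t \<in> {0,1}" "x \<in> {s, u}" for t x m
    using that a[of x m] l[of x "\<xi> m"] by (auto simp: lik_def)
  have lnb: "ln a \<le> ln (lik l t x (\<xi> m)) \<and> ln (lik l t x (\<xi> m)) \<le> 0" if "t \<in> {0,1}" "x \<in> {s, u}" for t x m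
    using likb[OF that, of m] a0 by auto
  have Xb: "X m \<omega> \<in> {-L..L}" if "m \<ge> 1" "\<omega> \<in> space M" for m \<omega>
    using lnb[OF d01[OF that], of s m] lnb[OF d01[OF that], of u m] that
    by (auto simp: X_def g_def L_def)
  have EX: "expectation (X m) \<le> - \<delta> m / 4" if m: "m \<ge> 1" for m
  proof -
    define E where "E = {\<omega> \<in> space M. d m \<omega> = 1}"
    have E: "E \<in> sets M"
    proof -
      have "E = d m -` {1} \<inter> space M" by (auto simp: E_def)
      then show ?thesis using measurable_sets[OF dmeas[OF m], of "{1}"] by simp
    qed
    have "expectation (X m) = expectation (\<lambda>\<omega>. g m 0 + (g m 1 - g m 0) * indicator E \<omega>)"
    proof (intro Bochner_Integration.integral_cong refl)
      fix \<omega> assume "\<omega> \<in> space M"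
      then show "X m \<omega> = g m 0 + (g m 1 - g m 0) * indicator E \<omega>"
        using d01[OF m, of \<omega>] m by (auto simp: X_def E_def indicator_def)
    qed
    also have "\<dots> = g m 0 + (g m 1 - g m 0) * prob E"
    proof -
      have i1: "integrable M (\<lambda>\<omega>. (g m 1 - g m 0) * indicator E \<omega>)"
        using E by (intro integrable_mult_right) (simp add: integrable_indicator_iff less_top[symmetric])
      have "expectation (\<lambda>\<omega>. g m 0 + (g m 1 - g m 0) * indicator E \<omega>) =
            expectation (\<lambda>_. g m 0) + expectation (\<lambda>\<omega>. (g m 1 - g m 0) * indicator E \<omega>)"
        using i1 by (intro Bochner_Integration.integral_add) auto
      also have "\<dots> = g m 0 + (g m 1 - g m 0) * prob E"
        using E by (simp add: prob_space)
      finally show ?thesis .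
    qed
    also have "prob E = l s (\<xi> m)" using pr1[OF m] by (simp add: E_def)
    also have "g m 0 + (g m 1 - g m 0) * l s (\<xi> m) =
       l s (\<xi> m) * (ln (l u (\<xi> m)) - ln (l s (\<xi> m))) +
       (1 - l s (\<xi> m)) * (ln (1 - l u (\<xi> m)) - ln (1 - l s (\<xi> m)))"
      by (simp add: g_def lik_def algebra_simps)
    also have "\<dots> \<le> - \<delta> m / 4"
      unfolding \<delta>_def using l[of s "\<xi> m"] l[of u "\<xi> m"] by (intro pinsker_like) auto
    finally show ?thesis .
  qed
  obtain z where z0: "0 < ereal z" and zl: "ereal z < liminf (\<lambda>n. ereal ((1 / real n powr p) * (\<Sum>k=1..n. \<delta> k)))"
    using ereal_dense2[OF lim] unfolding \<delta>_def by blast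
  have z: "z > 0" using z0 by simp
  have ev1: "eventually (\<lambda>n. z * real n powr p < (\<Sum>k=1..n. \<delta> k)) sequentially"
  proof -
    have "eventually (\<lambda>n. ereal z < ereal ((1 / real n powr p) * (\<Sum>k=1..n. \<delta> k))) sequentially"
      using less_LiminfD[OF zl] .
    moreover have "eventually (\<lambda>n. n \<ge> 1) sequentially" by (rule eventually_ge_at_top)
    ultimately show ?thesis
    proof eventually_elim
      case (elim n)
      then have "real n powr p > 0" by simp
      with elim show ?case by (simp add: field_simps)
    qed
  qed
  define \<epsilon> where "\<epsilon> = z / 8"
  have \<epsilon>: "\<epsilon> > 0" using z by (simp add: \<epsilon>_def)
  define \<mu> where "\<mu> n = (\<Sum>m\<in>{1..n}. expectation (X m))" for n
  define A where "A n = {\<omega>\<in>space M. \<mu> n + \<epsilon> * real n powr p \<le> (\<Sum>m\<in>{1..n}. X m \<omega>)}" for n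
  have Asets[measurable]: "A n \<in> sets M" for n unfolding A_def by measurable
  define C where "C = \<epsilon>\<^sup>2 / (2 * L\<^sup>2)"
  have C: "C > 0" using \<epsilon> L by (simp add: C_def)
  have Abound: "prob (A n) \<le> exp (- C * real n powr (2 * p - 1))" if n: "n \<ge> 1" for n
  proof -
    interpret H: Hoeffding_ineq M "{1..n}" X "\<lambda>_. -L" "\<lambda>_. L" "\<mu> n"
    proof unfold_locales
      show "indep_vars (\<lambda>_. borel) X {1..n}"
      proof -
        have "indep_vars (\<lambda>_. borel) (\<lambda>i \<omega>. g i (d i \<omega>)) {1..n}"
          by (rule indep_vars_compose2[OF indep_vars_subset[OF indep]]) auto
        moreover have "indep_vars (\<lambda>_. borel) (\<lambda>i \<omega>. g i (d i \<omega>)) {1..n} = indep_vars (\<lambda>_. borel) X {1..n}"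
          by (intro indep_vars_cong) (auto simp: X_def fun_eq_iff)
        ultimately show ?thesis by simp
      qed
      show "AE x in M. X i x \<in> {-L..L}" if "i \<in> {1..n}" for i
        using Xb that by auto
    qed (auto simp: \<mu>_def)
    have np: "real n > 0" using n by simp
    have "prob (A n) \<le> exp (-2 * (\<epsilon> * real n powr p)\<^sup>2 / (\<Sum>i\<in>{1..n}. (L - - L)\<^sup>2))"
      unfolding A_def using \<epsilon> L n by (intro H.Hoeffding_ineq_ge) auto
    also have "-2 * (\<epsilon> * real n powr p)\<^sup>2 / (\<Sum>i\<in>{1..n}. (L - - L)\<^sup>2) = - C * real n powr (2 * p - 1)"
    proof -
      have "(real n powr p)\<^sup>2 = real n powr (2 * p)"
        by (simp add: power2_eq_square powr_add[symmetric])
      moreover have "real n powr (2 * p - 1) = real n powr (2 * p) / real n"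
        using np by (simp add: powr_diff)
      ultimately show ?thesis using np L
        by (simp add: C_def power_mult_distrib field_simps power2_eq_square)
    qed
    finally show ?thesis .
  qed
  have sumg: "summable (\<lambda>n. exp (- C * real n powr (2 * p - 1)))"
  proof (rule summable_comparison_test_bigo)
    show "summable (\<lambda>n. norm (1 / real n ^ 2))"
      using inverse_power_summable[of 2, where 'a=real] by (simp add: divide_inverse)
    have r: "2 * p - 1 > 0" using pp by simp
    show "(\<lambda>n. exp (- C * real n powr (2 * p - 1))) \<in> O(\<lambda>n. 1 / real n ^ 2)"
      using C r by real_asymp
  qed
  have sumA: "summable (\<lambda>n. measure M (A n))"
    by (rule summable_comparison_test'[OF sumg, of 1]) (use Abound in auto)
  have AE1: "AE \<omega> in M. eventually (\<lambda>n. \<omega> \<in> space M - A n) sequentially"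
    by (rule borel_cantelli_AE1) (auto simp: sumA less_top[symmetric])
  have tp: "filterlim (\<lambda>n. \<epsilon> * real n powr p) at_top sequentially"
    using \<epsilon> pp by real_asymp
  show ?thesis
    using AE1 AE_space
  proof eventually_elim
    case (elim \<omega>)
    have ev: "eventually (\<lambda>n. \<omega> \<notin> A n \<and> n \<ge> 1 \<and> z * real n powr p < (\<Sum>k=1..n. \<delta> k)) sequentially"
      using elim(1) ev1 eventually_ge_at_top[of 1] by eventually_elim auto
    show ?case
    proof (rule filterlim_at_top_mono[OF tp])
      show "eventually (\<lambda>n. \<epsilon> * real n powr p \<le> (\<Sum>m=1..n. ln (lik l (d m \<omega>) s (\<xi> m)) - ln (lik l (d m \<omega>) u (\<xi> m)))) sequentially"
        using ev
      proof eventually_elim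
        case (elim n)
        have s1: "(\<Sum>m=1..n. X m \<omega>) < \<mu> n + \<epsilon> * real n powr p"
          using elim \<open>\<omega> \<in> space M\<close> by (auto simp: A_def)
        have s2: "\<mu> n \<le> (\<Sum>m=1..n. - \<delta> m / 4)"
          unfolding \<mu>_def by (intro sum_mono EX) auto
        have s3: "(\<Sum>m=1..n. - \<delta> m / 4) = - (\<Sum>m=1..n. \<delta> m) / 4"
          by (simp add: sum_negf sum_divide_distrib)
        have s4: "(\<Sum>m=1..n. ln (lik l (d m \<omega>) s (\<xi> m)) - ln (lik l (d m \<omega>) u (\<xi> m))) = - (\<Sum>m=1..n. X m \<omega>)"
          by (simp add: X_def g_def sum_negf[symmetric])
        show ?case using s1 s2 s3 s4 elim unfolding \<epsilon>_def by linarith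
      qed
    qed
  qed
qed


lemma unif_bound:
  fixes S :: "'v::euclidean_space set" and l :: "'v \<Rightarrow> 'v \<Rightarrow> real" and \<xi> :: "nat \<Rightarrow> 'v"
  assumes S: "compact S" and cont: "continuous_on UNIV (\<lambda>(x, y). l x y)"
    and l: "\<And>x y. 0 < l x y \<and> l x y < 1" and s: "s \<in> S" and b: "bounded (range \<xi>)"
  shows "\<exists>a>0. \<forall>x\<in>S. \<forall>k. a \<le> l x (\<xi> k) \<and> l x (\<xi> k) \<le> 1 - a"
proof -
  define K where "K = closure (range \<xi>)"
  have K: "compact K" unfolding K_def using b by (simp add: compact_closure)
  define T where "T = (\<lambda>(x, y). l x y) ` (S \<times> K)"
  have T: "compact T" unfolding T_def
    by (intro compact_continuous_image continuous_on_subset[OF cont] compact_Times S K) auto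
  have Tne: "T \<noteq> {}" using s unfolding T_def K_def by (auto intro: closure_subset[THEN subsetD])
  obtain m0 where m0: "m0 \<in> T" "\<forall>t\<in>T. m0 \<le> t" using compact_attains_inf[OF T Tne] by blast
  obtain m1 where m1: "m1 \<in> T" "\<forall>t\<in>T. t \<le> m1" using compact_attains_sup[OF T Tne] by blast
  have m0p: "m0 > 0" and m1p: "m1 < 1" using m0(1) m1(1) l unfolding T_def by auto
  have mem: "l x (\<xi> k) \<in> T" if "x \<in> S" for x k
    unfolding T_def K_def using that by (force intro: closure_subset[THEN subsetD])
  show ?thesis
  proof (intro exI[of _ "min m0 (1 - m1)"] conjI ballI allI)
    show "min m0 (1 - m1) > 0" using m0p m1p by simp
    fix x k assume x: "x \<in> S"
    have "m0 \<le> l x (\<xi> k)" "l x (\<xi> k) \<le> m1" using mem[OF x, of k] m0(2) m1(2) by auto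
    then show "min m0 (1 - m1) \<le> l x (\<xi> k)" "l x (\<xi> k) \<le> 1 - min m0 (1 - m1)" by linarith+
  qed
qed

theorem theorem3:
  fixes S :: "'v::euclidean_space set" and l :: "'v \<Rightarrow> 'v \<Rightarrow> real"
    and s :: 'v and \<xi> :: "nat \<Rightarrow> 'v"
    and P :: "'a measure" and d :: "nat \<Rightarrow> 'a \<Rightarrow> nat"
    and c :: "nat \<Rightarrow> 'v" and M :: nat and p0 :: "nat \<Rightarrow> real" and j :: nat
  assumes "compact S"
    and "continuous_on UNIV (\<lambda>(x, y). l x y)"
    and "\<And>x y. 0 < l x y \<and> l x y < 1"
    and "s \<in> S"
    and "bounded (range \<xi>)"
    and "prob_space P"
    and "prob_space.indep_vars P (\<lambda>_. count_space UNIV) d {1..}"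
    and "\<And>k \<omega>. k \<ge> 1 \<Longrightarrow> \<omega> \<in> space P \<Longrightarrow> d k \<omega> \<in> {0, 1}"
    and "\<And>k. k \<ge> 1 \<Longrightarrow> measure P {\<omega> \<in> space P. d k \<omega> = 1} = l s (\<xi> k)"
    and "\<And>i. i \<in> {1..M} \<Longrightarrow> c i \<in> S"
    and "inj_on c {1..M}"
    and "\<And>i. i \<in> {1..M} \<Longrightarrow> 0 < p0 i \<and> p0 i < 1"
    and "(\<Sum>i=1..M. p0 i) = 1"
    and "j \<in> {1..M}" and "c j = s"
    and "\<And>i. i \<in> {1..M} \<Longrightarrow> i \<noteq> j \<Longrightarrow>
           (\<exists>p::real. p > 1/2 \<and>
              liminf (\<lambda>n. ereal ((1 / real n powr p) *
                 (\<Sum>k=1..n. (l s (\<xi> k) - l (c i) (\<xi> k))\<^sup>2))) > 0)"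
  shows "AE \<omega> in P. (\<lambda>k. posterior l c M p0 \<xi> (\<lambda>k. d k \<omega>) k j) \<longlonglongrightarrow> 1"
proof -
  note asm = assms
  interpret prob_space P by fact
  obtain a where a0: "a > 0" and a: "\<forall>x\<in>S. \<forall>k. a \<le> l x (\<xi> k) \<and> l x (\<xi> k) \<le> 1 - a"
    using unif_bound[OF asm(1-5)] by blast
  have AEi: "AE \<omega> in P. filterlim (\<lambda>n. \<Sum>m=1..n. ln (lik l (d m \<omega>) (c j) (\<xi> m)) - ln (lik l (d m \<omega>) (c i) (\<xi> m)))
           at_top sequentially" if i: "i \<in> {1..M}" "i \<noteq> j" for i
  proof -
    obtain p where pp: "p > 1/2" and lim: "liminf (\<lambda>n. ereal ((1 / real n powr p) *
                 (\<Sum>k=1..n. (l s (\<xi> k) - l (c i) (\<xi> k))\<^sup>2))) > 0"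
      using asm(16)[OF i] by blast
    have ab: "a \<le> l x (\<xi> k) \<and> l x (\<xi> k) \<le> 1 - a" if "x \<in> {s, c i}" for x k
      using that a asm(4) asm(10)[OF i(1)] by auto
    show ?thesis unfolding \<open>c j = s\<close>
      by (rule key[OF asm(3) asm(7) asm(8) asm(9) a0 ab pp lim]) auto
  qed
  have "AE \<omega> in P. \<forall>i\<in>{1..M} - {j}. filterlim (\<lambda>n. \<Sum>m=1..n. ln (lik l (d m \<omega>) (c j) (\<xi> m)) - ln (lik l (d m \<omega>) (c i) (\<xi> m)))
           at_top sequentially"
    by (rule AE_ball_countable') (use AEi in auto)
  then show ?thesis
  proof eventually_elim
    case (elim \<omega>)
    show ?case
      by (rule post_to_1[where l=l]) (use asm(3,12,13,14) elim in auto)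
  qed
qed

end
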